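(* Let $X$ be a real random variable with $X\ge -M$ almost surely for some $M>0$, $E(X)<0$, and $P(X>x)\sim x^{-\alpha}$ as $x\to\infty$ for some $\alpha\in(1,\infty)$. Let $(X_i)$ be IID with the law of $X$, and let $N$ be independent of $(X_i)$ with $P(N=k)=C k^{-(1+\eta)}$ for $k\in\{1,2,\dots\}$, where $\eta>0$ and $C$ is the normalising constant. Put $S_N=\sum_{k=1}^N X_k$. Then $$\alpha-1\le \mathbb{I}(S_N)\le \alpha+\eta-1.$$
   Context: For a real random variable $Y$, $\mathbb{I}(Y):=\sup\{s\ge0:E((Y^+)^s)<\infty\}$, where $y^+=\max(0,y)$. *)

theory Defs
  imports "HOL-Probability.Probability" "HOL-Library.Landau_Symbols"
begin

definition moment_index :: "'a measure \<Rightarrow> ('a \<Rightarrow> real) \<Rightarrow> ereal" where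
  "moment_index M Y =
     Sup (ereal ` {s. 0 \<le> s \<and> (\<integral>\<^sup>+ \<omega>. ennreal (max 0 (Y \<omega>) powr s) \<partial>M) < \<infinity>})"

end

theory Submission
  imports Defs
begin

lemma tangent_powr:
  fixes a b p :: real
  assumes "p > 1" "a \<ge> 0" "b \<ge> 0"
  shows "b powr p \<le> a powr p + p * b powr (p - 1) * (b - a)"
proof -
  have y: "b powr (p-1) * a \<le> (b powr (p-1)) powr (p/(p-1)) / (p/(p-1)) + a powr p / p"
    using assms by (intro Youngs_inequality) (auto simp: field_simps)
  have "(b powr (p-1)) powr (p/(p-1)) = b powr p"
    using assms by (simp add: powr_powr)
  with y have "p * (b powr (p-1) * a) \<le> (p-1) * b powr p + a powr p"
    using assms by (simp add: field_simps)
  moreover have "b powr (p-1) * b = b powr p"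
    using assms by (cases "b = 0") (auto simp: powr_diff)
  ultimately show ?thesis by (simp add: algebra_simps)
qed

lemma pw_bound:
  fixes x y q e B :: real
  assumes "q > 0" "e > 0" "B \<ge> 0" "y \<ge> B" "x \<ge> -B"
  shows "(y+x) powr q * x \<le> - ((y-B) powr q * max 0 (-x)) + (1+e) powr q * y powr q * max 0 x
            + (1 + 1/e) powr q * (max 0 x) powr (q+1)"
proof -
  have pos: "0 \<le> (1+e) powr q * y powr q * max 0 x" "0 \<le> (1 + 1/e) powr q * (max 0 x) powr (q+1)"
    "0 \<le> (y-B) powr q * max 0 (-x)"
    by auto
  consider "x < 0" | "0 \<le> x" "x \<le> e*y" | "x > e*y" "x \<ge> 0" using assms
    by (smt (verit) mult_pos_pos)
  then show ?thesis
  proof cases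
    case 1
    have "(y-B) powr q \<le> (y+x) powr q" using assms by (intro powr_mono2) auto
    then have "(y+x) powr q * x \<le> (y-B) powr q * x" using 1 by (intro mult_right_mono_neg) auto
    then show ?thesis using 1 pos by (simp add: max_def)
  next
    case 2
    have "(y+x) powr q \<le> ((1+e)*y) powr q" using assms 2 by (intro powr_mono2) (auto simp: algebra_simps)
    also have "\<dots> = (1+e) powr q * y powr q" using assms by (simp add: powr_mult)
    finally have "(y+x) powr q * x \<le> (1+e) powr q * y powr q * x" using 2 by (intro mult_right_mono) auto
    then show ?thesis using 2 pos by (simp add: max_def) (smt (verit) pos(2))
  next
    case 3
    have "y \<le> x / e" using 3 assms by (simp add: field_simps)
    then have "y + x \<le> (1 + 1/e) * x" by (simp add: algebra_simps)
    then have "(y+x) powr q \<le> ((1+1/e)*x) powr q" using assms 3 by (intro powr_mono2) auto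
    also have "\<dots> = (1+1/e) powr q * x powr q" using assms 3 by (simp add: powr_mult)
    finally have h1: "(y+x) powr q * x \<le> (1+1/e) powr q * x powr q * x" using 3 by (intro mult_right_mono) auto
    have h2: "x powr q * x = x powr (q+1)" using 3 assms
      by (simp add: powr_add)
    have h3: "0 \<le> (1+e) powr q * y powr q * max 0 x" by auto
    from h1 h2 have "(y+x) powr q * x \<le> (1+1/e) powr q * (max 0 x) powr (q+1)" using 3 by (simp add: mult.assoc)
    moreover have m1: "max 0 (-x) = 0" using 3 by simp
    moreover have m2: "max 0 x = x" using 3 by simp
    moreover have "0 \<le> (1+e) powr q * y powr q * x" using 3 by simp
    ultimately show ?thesis unfolding m1 m2 by linarith
  qed
qed

lemma sum_powr_le:
  fixes u v p :: real
  assumes "u \<ge> 0" "v \<ge> 0" "p > 0"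
  shows "(u+v) powr p \<le> 2 powr p * (u powr p + v powr p)"
proof -
  have "(u+v) powr p \<le> (2 * max u v) powr p" using assms by (intro powr_mono2) auto
  also have "\<dots> = 2 powr p * max u v powr p" using assms by (simp add: powr_mult)
  also have "max u v powr p \<le> u powr p + v powr p" by (auto simp: max_def)
  finally show ?thesis by (simp add: mult_left_mono)
qed

lemma lin_aux: "\<And>Q Zb E a b \<mu>::real. Q*b - \<mu>/4*Q \<le> Zb \<Longrightarrow> E \<le> a*Q + \<mu>/4*Q \<Longrightarrow> b*Q = a*Q + \<mu>*Q \<Longrightarrow> -Zb + E \<le> -(\<mu>/2)*Q"
  by (simp add: field_simps)

lemma drift:
  fixes P :: "real measure" and p B :: real
  assumes P: "prob_space P" "sets P = sets borel"
    and p: "p > 1" and B: "B > 0"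
    and int: "integrable P (\<lambda>x. x)" and neg: "(\<integral>x. x \<partial>P) < 0"
    and lb: "AE x in P. x \<ge> -B"
    and mom: "integrable P (\<lambda>x. max 0 x powr p)"
  shows "\<exists>c>0. \<exists>K. \<forall>y. integrable P (\<lambda>x. max 0 (y+x) powr p) \<and>
     (\<integral>x. max 0 (y+x) powr p \<partial>P) + c * max 0 y powr (p-1) \<le> max 0 y powr p + K"
proof -
  interpret prob_space P by (rule P)
  have [measurable_cong]: "sets P = sets borel" by (rule P)
  define q where "q = p - 1"
  have q: "q > 0" "p = q + 1" using p by (auto simp: q_def)
  have intp: "integrable P (\<lambda>x. max 0 x)" using int by auto
  have intn: "integrable P (\<lambda>x. max 0 (-x))" using int by auto
  define a where "a = (\<integral>x. max 0 x \<partial>P)"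
  define b where "b = (\<integral>x. max 0 (-x) \<partial>P)"
  define m where "m = (\<integral>x. max 0 x powr p \<partial>P)"
  have a0: "a \<ge> 0" unfolding a_def by auto
  have m0: "m \<ge> 0" unfolding m_def by auto
  have "(\<integral>x. x \<partial>P) = (\<integral>x. max 0 x - max 0 (-x) \<partial>P)"
    by (intro Bochner_Integration.integral_cong) (auto simp: max_def)
  also have "\<dots> = a - b" unfolding a_def b_def using intp intn by simp
  finally have ab: "a - b < 0" using neg by simp
  define \<mu> where "\<mu> = b - a"
  have \<mu>: "\<mu> > 0" "\<mu> \<le> b" using ab a0 by (auto simp: \<mu>_def)
  have b0: "b > 0" using \<mu> by simp
  define d where "d = \<mu> / (4 * (a+1))"
  have d: "d > 0" using \<mu> a0 by (auto simp: d_def)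
  define e where "e = (1 + d) powr (1/q) - 1"
  have "1 powr (1/q) < (1+d) powr (1/q)" using d q by (intro powr_less_mono2) auto
  then have e: "e > 0" by (simp add: e_def)
  have e1: "(1+e) powr q = 1 + d" using d q by (simp add: e_def powr_powr)
  have ea: "(1+e) powr q * a \<le> a + \<mu>/4"
  proof -
    have "d * a \<le> \<mu>/4" using \<mu> a0 by (simp add: d_def field_simps)
    then show ?thesis by (simp add: e1 algebra_simps)
  qed
  define d' where "d' = \<mu> / (4*b)"
  have d': "d' > 0" "d' < 1" using \<mu> b0 by (auto simp: d'_def field_simps)
  define r where "r = (1 - d') powr (1/q)"
  have r0: "r > 0" using d' by (simp add: r_def)
  have "(1-d') powr (1/q) < 1 powr (1/q)" using d' q by (intro powr_less_mono2) auto
  then have r1: "r < 1" by (simp add: r_def)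
  have rq: "r powr q = 1 - d'" using d' q by (simp add: r_def powr_powr)
  define Y0 where "Y0 = B / (1 - r)"
  have Y0B: "Y0 \<ge> B" using r0 r1 B by (simp add: Y0_def field_simps)
  define C where "C = (1 + 1/e) powr q"
  define K1 where "K1 = p * C * m"
  define c where "c = p * \<mu> / 2"
  have c: "c > 0" using p \<mu> by (simp add: c_def)
  define K2 where "K2 = 2 powr p * (Y0 powr p + m) + c * Y0 powr q"
  have K1: "K1 \<ge> 0" using p m0 by (simp add: K1_def C_def)
  have K2: "K2 \<ge> 0" using c m0 by (simp add: K2_def)
  have intY: "integrable P (\<lambda>x. max 0 (y+x) powr p)" for y
  proof (rule Bochner_Integration.integrable_bound)
    show "integrable P (\<lambda>x. 2 powr p * (\<bar>y\<bar> powr p + max 0 x powr p))"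
      using mom by auto
    show "AE x in P. norm (max 0 (y+x) powr p) \<le> norm (2 powr p * (\<bar>y\<bar> powr p + max 0 x powr p))"
    proof (intro AE_I2)
      fix x
      have "max 0 (y+x) powr p \<le> (\<bar>y\<bar> + max 0 x) powr p" using p by (intro powr_mono2) auto
      also have "\<dots> \<le> 2 powr p * (\<bar>y\<bar> powr p + max 0 x powr p)" using p by (intro sum_powr_le) auto
      finally show "norm (max 0 (y+x) powr p) \<le> norm (2 powr p * (\<bar>y\<bar> powr p + max 0 x powr p))"
        by simp
    qed
  qed simp
  have main: "(\<integral>x. max 0 (y+x) powr p \<partial>P) + c * max 0 y powr (p-1) \<le> max 0 y powr p + max K1 K2" for y
    proof -
    show "(\<integral>x. max 0 (y+x) powr p \<partial>P) + c * max 0 y powr (p-1) \<le> max 0 y powr p + max K1 K2"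
    proof (cases "y < Y0")
      case True
      have "(\<integral>x. max 0 (y+x) powr p \<partial>P) \<le> (\<integral>x. 2 powr p * (Y0 powr p + max 0 x powr p) \<partial>P)"
      proof (intro integral_mono intY)
        show "integrable P (\<lambda>x. 2 powr p * (Y0 powr p + max 0 x powr p))" using mom by auto
        fix x
        have "max 0 (y+x) powr p \<le> (Y0 + max 0 x) powr p" using p True Y0B B by (intro powr_mono2) auto
        also have "\<dots> \<le> 2 powr p * (Y0 powr p + max 0 x powr p)" using p Y0B B by (intro sum_powr_le) auto
        finally show "max 0 (y+x) powr p \<le> 2 powr p * (Y0 powr p + max 0 x powr p)" .
      qed
      also have "\<dots> = 2 powr p * (Y0 powr p + m)" using mom by (simp add: m_def prob_space)
      finally have i1: "(\<integral>x. max 0 (y+x) powr p \<partial>P) \<le> 2 powr p * (Y0 powr p + m)" .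
      have "max 0 y powr q \<le> Y0 powr q" using True q Y0B B by (intro powr_mono2) auto
      then have "max 0 y powr (p-1) \<le> Y0 powr q" by (simp add: q_def)
      then have "c * max 0 y powr (p-1) \<le> c * Y0 powr q" using c by (intro mult_left_mono) auto
      with i1 show ?thesis unfolding K2_def by (smt (verit) powr_ge_zero)
    next
      case False
      then have y: "y \<ge> Y0" by simp
      then have yB: "y \<ge> B" using Y0B by simp
      have y0: "y > 0" using yB B by simp
      have "y - B \<ge> r * y"
      proof -
        have "B \<le> (1 - r) * y" using y r1 by (simp add: Y0_def field_simps)
        then show ?thesis by (simp add: algebra_simps)
      qed
      then have "(r*y) powr q \<le> (y - B) powr q" using r0 y0 q by (intro powr_mono2) auto
      then have yBq: "(1 - d') * y powr q \<le> (y - B) powr q" using r0 y0 by (simp add: powr_mult rq)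
      define f where "f x = y powr p + p * (- ((y-B) powr q * max 0 (-x)) + (1+e) powr q * y powr q * max 0 x
            + C * (max 0 x) powr p)" for x
      have intf: "integrable P f" unfolding f_def using intp intn mom by auto
      have "(\<integral>x. max 0 (y+x) powr p \<partial>P) \<le> (\<integral>x. f x \<partial>P)"
      proof (intro integral_mono_AE intY intf)
        show "AE x in P. max 0 (y+x) powr p \<le> f x"
          using lb
        proof eventually_elim
          case (elim x)
          then have yx: "y + x \<ge> 0" using yB by simp
          have "max 0 (y+x) powr p = (y+x) powr p" using yx by simp
          also have "\<dots> \<le> y powr p + p * (y+x) powr (p-1) * ((y+x) - y)"
            using p yx y0 by (intro tangent_powr) auto
          also have "\<dots> = y powr p + p * ((y+x) powr q * x)" by (simp add: q_def)
          also have "\<dots> \<le> f x" unfolding f_def C_def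
            using pw_bound[OF q(1) e _ yB elim] B p q
            by (intro add_left_mono mult_left_mono) (auto simp: q(2))
          finally show ?case .
        qed
      qed
      also have "(\<integral>x. f x \<partial>P) = y powr p + p * (- ((y-B) powr q * b) + (1+e) powr q * y powr q * a + C * m)"
        unfolding f_def a_def b_def m_def using intp intn mom by (simp add: prob_space)
      also have "\<dots> \<le> y powr p + p * (- (\<mu>/2) * y powr q + C * m)"
      proof -
        have f1: "(1 - d') * y powr q * b \<le> (y-B) powr q * b" using yBq b0 by (intro mult_right_mono) auto
        have f2: "(1+e) powr q * y powr q * a \<le> a * y powr q + \<mu>/4 * y powr q"
        proof -
          have "y powr q * ((1+e) powr q * a) \<le> y powr q * (a + \<mu>/4)"
            using ea by (intro mult_left_mono) auto
          then show ?thesis by (simp add: algebra_simps)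
        qed
        have "d' * b = \<mu>/4" using b0 by (simp add: d'_def)
        then have f3: "(1 - d') * y powr q * b = y powr q * b - \<mu>/4 * y powr q" by (simp add: algebra_simps)
        have f4: "b * y powr q = a * y powr q + \<mu> * y powr q" by (simp add: \<mu>_def algebra_simps)
        have "- ((y-B) powr q * b) + (1+e) powr q * y powr q * a \<le> - (\<mu>/2) * y powr q"
          by (rule lin_aux[where Q="y powr q" and Zb="(y-B) powr q * b" and E="(1+e) powr q * y powr q * a" and a=a and b=b and \<mu>=\<mu>])
             (use f1 f2 f3 f4 in \<open>auto simp: mult.commute\<close>)
        then show ?thesis using p by simp
      qed
      finally have "(\<integral>x. max 0 (y+x) powr p \<partial>P) + c * y powr q \<le> y powr p + K1"
        by (simp add: c_def K1_def algebra_simps)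
      then show ?thesis using y0 by (simp add: q_def)
    qed
  qed
  show ?thesis using main intY c by blast
qed

lemma (in prob_space) indep_nn_fubini:
  fixes Y Z :: "'a \<Rightarrow> real" and f :: "real \<Rightarrow> real \<Rightarrow> ennreal"
  assumes ind: "indep_var borel Y borel Z" and f[measurable]: "case_prod f \<in> borel_measurable (borel \<Otimes>\<^sub>M borel)"
  shows "(\<integral>\<^sup>+\<omega>. f (Y \<omega>) (Z \<omega>) \<partial>M) = (\<integral>\<^sup>+\<omega>. (\<integral>\<^sup>+z. f (Y \<omega>) z \<partial>distr M borel Z) \<partial>M)"
proof -
  have rv[measurable]: "Y \<in> borel_measurable M" "Z \<in> borel_measurable M"
    using indep_var_rv1[OF ind] indep_var_rv2[OF ind] by auto
  have eq: "distr M borel Y \<Otimes>\<^sub>M distr M borel Z = distr M (borel \<Otimes>\<^sub>M borel) (\<lambda>x. (Y x, Z x))"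
    using ind by (simp add: indep_var_distribution_eq)
  interpret pY: prob_space "distr M borel Y" by (rule prob_space_distr) simp
  interpret pZ: prob_space "distr M borel Z" by (rule prob_space_distr) simp
  interpret pair_sigma_finite "distr M borel Y" "distr M borel Z" ..
  have "(\<integral>\<^sup>+\<omega>. f (Y \<omega>) (Z \<omega>) \<partial>M) = (\<integral>\<^sup>+w. case_prod f w \<partial>distr M (borel \<Otimes>\<^sub>M borel) (\<lambda>x. (Y x, Z x)))"
    by (subst nn_integral_distr) auto
  also have "\<dots> = (\<integral>\<^sup>+w. case_prod f w \<partial>(distr M borel Y \<Otimes>\<^sub>M distr M borel Z))"
    by (simp add: eq)
  also have "\<dots> = (\<integral>\<^sup>+y. (\<integral>\<^sup>+z. f y z \<partial>distr M borel Z) \<partial>distr M borel Y)"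
    by (subst pZ.nn_integral_fst[symmetric]) (auto simp: measurable_cong_sets[OF sets_pair_measure_cong[OF sets_distr sets_distr] refl])
  also have "\<dots> = (\<integral>\<^sup>+\<omega>. (\<integral>\<^sup>+z. f (Y \<omega>) z \<partial>distr M borel Z) \<partial>M)"
  proof (subst nn_integral_distr)
    show "(\<lambda>y. \<integral>\<^sup>+ z. f y z \<partial>distr M borel Z) \<in> borel_measurable (distr M borel Y)"
      by (subst measurable_cong_sets[OF sets_distr refl]) 
         (rule pZ.borel_measurable_nn_integral, simp add: measurable_cong_sets[OF sets_pair_measure_cong[OF refl sets_distr] refl])
  qed auto
  finally show ?thesis .
qed

locale setting = prob_space M for M :: "'a measure" +
  fixes Xs :: "nat \<Rightarrow> 'a \<Rightarrow> real" and N :: "'a \<Rightarrow> nat" and B \<alpha> \<eta> C :: real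
  assumes indep: "indep_vars (\<lambda>_. borel) (\<lambda>i. if i = 0 then (\<lambda>\<omega>. real (N \<omega>)) else Xs i) UNIV"
    and ident: "\<And>i. i \<ge> 1 \<Longrightarrow> distr M borel (Xs i) = distr M borel (Xs 1)"
    and B_pos: "B > 0"
    and lower: "AE \<omega> in M. Xs 1 \<omega> \<ge> - B"
    and neg_mean: "integral\<^sup>L M (Xs 1) < 0"
    and \<alpha>: "\<alpha> > 1"
    and tail: "(\<lambda>x. measure M {\<omega> \<in> space M. Xs 1 \<omega> > x}) \<sim>[at_top] (\<lambda>x. x powr (- \<alpha>))"
    and \<eta>: "\<eta> > 0"
    and C_def: "C = 1 / (\<Sum>k. real (Suc k) powr (- (1 + \<eta>)))"
    and N_law: "\<And>k. k \<ge> 1 \<Longrightarrow> measure M {\<omega> \<in> space M. N \<omega> = k} = C * real k powr (- (1 + \<eta>))"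
begin

definition F where "F i = (if i = 0 then (\<lambda>\<omega>. real (N \<omega>)) else Xs i)"
definition S where "S n \<omega> = (\<Sum>k = 1..n. Xs k \<omega>)"
definition P where "P = distr M borel (Xs 1)"

lemma indepF: "indep_vars (\<lambda>_. borel) F UNIV"
  using indep unfolding F_def[abs_def] .

lemma X_meas[measurable]: "i \<ge> 1 \<Longrightarrow> Xs i \<in> borel_measurable M"
  using indepF unfolding indep_vars_def by (auto simp: F_def dest!: bspec[of _ _ i] split: if_splits)

lemma X_meas': "Xs (Suc i) \<in> borel_measurable M"
  by (rule X_meas) simp

lemma N_meas[measurable]: "(\<lambda>\<omega>. real (N \<omega>)) \<in> borel_measurable M"
proof -
  have "random_variable borel (F 0)" using indepF unfolding indep_vars_def by auto
  then show ?thesis by (simp add: F_def)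
qed

lemma S_meas[measurable]: "S n \<in> borel_measurable M"
  unfolding S_def[abs_def] by (intro borel_measurable_sum X_meas) auto

lemma N_sets[measurable]: "{\<omega> \<in> space M. N \<omega> = k} \<in> sets M"
proof -
  have "{\<omega> \<in> space M. N \<omega> = k} = {\<omega> \<in> space M. real (N \<omega>) = real k}" by auto
  also have "\<dots> \<in> sets M" by measurable
  finally show ?thesis .
qed

lemma distrX: "i \<ge> 1 \<Longrightarrow> distr M borel (Xs i) = P"
  unfolding P_def by (rule ident)

lemma probP: "prob_space P" unfolding P_def by (rule prob_space_distr) simp
lemma setsP[simp]: "sets P = sets borel" unfolding P_def by simp

lemma S_Suc: "S (Suc n) \<omega> = S n \<omega> + Xs (Suc n) \<omega>"
  unfolding S_def by simp

lemma S_0[simp]: "S 0 \<omega> = 0" unfolding S_def by simp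

lemma indep_S_X: "indep_var borel (S n) borel (Xs (Suc n))"
proof -
  have "indep_var (PiM {1..n} (\<lambda>_. borel)) (\<lambda>\<omega>. restrict (\<lambda>i. F i \<omega>) {1..n})
           (PiM {Suc n} (\<lambda>_. borel)) (\<lambda>\<omega>. restrict (\<lambda>i. F i \<omega>) {Suc n})"
    by (rule indep_var_restrict[OF indepF]) auto
  then have "indep_var borel ((\<lambda>f. \<Sum>k\<in>{1..n}. f k) \<circ> (\<lambda>\<omega>. restrict (\<lambda>i. F i \<omega>) {1..n}))
           borel ((\<lambda>f. f (Suc n)) \<circ> (\<lambda>\<omega>. restrict (\<lambda>i. F i \<omega>) {Suc n}))"
    apply (rule indep_var_compose[OF _ _ measurable_component_singleton])
    apply (measurable)[1]
    apply simp
    done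
  also have "((\<lambda>f. \<Sum>k\<in>{1..n}. f k) \<circ> (\<lambda>\<omega>. restrict (\<lambda>i. F i \<omega>) {1..n})) = S n"
    by (auto simp: S_def F_def fun_eq_iff intro!: sum.cong)
  also have "((\<lambda>f. f (Suc n)) \<circ> (\<lambda>\<omega>. restrict (\<lambda>i. F i \<omega>) {Suc n})) = Xs (Suc n)"
    by (auto simp: F_def fun_eq_iff)
  finally show ?thesis .
qed

lemma indep_N_S: "indep_var borel (\<lambda>\<omega>. real (N \<omega>)) borel (S n)"
proof -
  have "indep_var (PiM {0} (\<lambda>_. borel)) (\<lambda>\<omega>. restrict (\<lambda>i. F i \<omega>) {0})
           (PiM {1..n} (\<lambda>_. borel)) (\<lambda>\<omega>. restrict (\<lambda>i. F i \<omega>) {1..n})"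
    by (rule indep_var_restrict[OF indepF]) auto
  then have "indep_var borel ((\<lambda>f. f 0) \<circ> (\<lambda>\<omega>. restrict (\<lambda>i. F i \<omega>) {0}))
           borel ((\<lambda>f. \<Sum>k\<in>{1..n}. f k) \<circ> (\<lambda>\<omega>. restrict (\<lambda>i. F i \<omega>) {1..n}))"
    by (rule indep_var_compose) (rule measurable_component_singleton, simp, measurable)
  also have "((\<lambda>f. \<Sum>k\<in>{1..n}. f k) \<circ> (\<lambda>\<omega>. restrict (\<lambda>i. F i \<omega>) {1..n})) = S n"
    by (auto simp: S_def F_def fun_eq_iff intro!: sum.cong)
  also have "((\<lambda>f. f 0) \<circ> (\<lambda>\<omega>. restrict (\<lambda>i. F i \<omega>) {0})) = (\<lambda>\<omega>. real (N \<omega>))"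
    by (auto simp: F_def fun_eq_iff)
  finally show ?thesis .
qed

end

lemma exists_dyadic:
  fixes t :: real assumes "t > 1"
  shows "\<exists>k. 2^k < t \<and> t \<le> 2^(Suc k)"
proof -
  obtain n where n: "t < 2^n" using real_arch_pow[of 2 t] by auto
  define m where "m = (LEAST n. t \<le> (2::real)^n)"
  have m: "t \<le> 2^m" unfolding m_def by (rule LeastI[of _ n]) (use n in linarith)
  have "m \<noteq> 0"
  proof
    assume "m = 0" then show False using m assms by simp
  qed
  then obtain k where k: "m = Suc k" by (cases m) auto
  have "\<not> t \<le> 2^k"
  proof
    assume "t \<le> 2^k"
    then have "m \<le> k" unfolding m_def by (rule Least_le)
    then show False using k by simp
  qed
  then show ?thesis using m k by (intro exI[of _ k]) auto
qed

context setting
begin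

lemma tail_bounds:
  "\<exists>x0\<ge>1. \<forall>x\<ge>x0. prob {\<omega>\<in>space M. Xs 1 \<omega> > x} \<le> 2 * x powr (-\<alpha>) \<and>
                    x powr (-\<alpha>) / 2 \<le> prob {\<omega>\<in>space M. Xs 1 \<omega> > x}"
proof -
  define f where "f x = prob {\<omega>\<in>space M. Xs 1 \<omega> > x}" for x
  define h where "h x = (if f x = 0 \<and> x powr (-\<alpha>) = 0 then 1 else f x / x powr (-\<alpha>))" for x
  have lim: "(h \<longlongrightarrow> 1) at_top" using asymp_equivD[OF tail] unfolding h_def f_def .
  have e1: "eventually (\<lambda>x. h x > 1/2) at_top" by (rule order_tendstoD(1)[OF lim]) simp
  have e2: "eventually (\<lambda>x. h x < 3/2) at_top" by (rule order_tendstoD(2)[OF lim]) simp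
  have "eventually (\<lambda>x. h x > 1/2 \<and> h x < 3/2 \<and> x > 1) at_top"
    using e1 e2 eventually_gt_at_top[of 1]
    by eventually_elim auto
  then obtain x0 where x0: "\<And>x. x \<ge> x0 \<Longrightarrow> h x > 1/2 \<and> h x < 3/2 \<and> x > 1"
    by (auto simp: eventually_at_top_linorder)
  show ?thesis
  proof (intro exI[of _ "max x0 1"] conjI allI impI)
    fix x assume x: "max x0 1 \<le> x"
    then have hx: "h x > 1/2" "h x < 3/2" and x1: "x > 1" using x0[of x] by auto
    have g: "x powr (-\<alpha>) > 0" using x1 by simp
    then have "h x = f x / x powr (-\<alpha>)" by (simp add: h_def)
    with hx g have "f x > x powr (-\<alpha>) / 2" "f x < 3/2 * x powr (-\<alpha>)"
      by (simp_all add: field_simps)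
    then show "prob {\<omega>\<in>space M. Xs 1 \<omega> > x} \<le> 2 * x powr (-\<alpha>)"
      "x powr (-\<alpha>) / 2 \<le> prob {\<omega>\<in>space M. Xs 1 \<omega> > x}" using g unfolding f_def by auto
  qed simp
qed

lemma tail_global: "\<exists>D>0. \<forall>x\<ge>1. prob {\<omega>\<in>space M. Xs 1 \<omega> > x} \<le> D * x powr (-\<alpha>)"
proof -
  obtain x0 where x0: "x0 \<ge> 1" "\<And>x. x \<ge> x0 \<Longrightarrow> prob {\<omega>\<in>space M. Xs 1 \<omega> > x} \<le> 2 * x powr (-\<alpha>)"
    using tail_bounds by blast
  define D where "D = max 2 (x0 powr \<alpha>)"
  show ?thesis
  proof (intro exI[of _ D] conjI allI impI)
    show "D > 0" by (simp add: D_def)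
    fix x :: real assume x: "x \<ge> 1"
    show "prob {\<omega>\<in>space M. Xs 1 \<omega> > x} \<le> D * x powr (-\<alpha>)"
    proof (cases "x \<ge> x0")
      case True
      then have "prob {\<omega>\<in>space M. Xs 1 \<omega> > x} \<le> 2 * x powr (-\<alpha>)" by (rule x0)
      also have "\<dots> \<le> D * x powr (-\<alpha>)" by (intro mult_right_mono) (auto simp: D_def)
      finally show ?thesis .
    next
      case False
      have "x powr \<alpha> \<le> x0 powr \<alpha>" using False x \<alpha> by (intro powr_mono2) auto
      then have "1 \<le> x0 powr \<alpha> * x powr (-\<alpha>)" using x by (simp add: powr_minus field_simps)
      also have "\<dots> \<le> D * x powr (-\<alpha>)" by (intro mult_right_mono) (auto simp: D_def)
      finally show ?thesis using prob_le_1 by (meson order_trans)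
    qed
  qed
qed

lemma moment_finite:
  assumes p: "0 < p" "p < \<alpha>"
  shows "(\<integral>\<^sup>+\<omega>. ennreal (max 0 (Xs 1 \<omega>) powr p) \<partial>M) < \<infinity>"
proof -
  obtain D where D: "D > 0" "\<And>x. x \<ge> 1 \<Longrightarrow> prob {\<omega>\<in>space M. Xs 1 \<omega> > x} \<le> D * x powr (-\<alpha>)"
    using tail_global by blast
  define E where "E k = {\<omega>\<in>space M. 2^k < Xs 1 \<omega>}" for k :: nat
  have E[measurable]: "E k \<in> sets M" for k unfolding E_def by measurable
  define c where "c k = ennreal (2 powr (real (Suc k) * p))" for k :: nat
  have pw: "ennreal (max 0 (Xs 1 \<omega>) powr p) \<le> 1 + (\<Sum>k. c k * indicator (E k) \<omega>)" if \<omega>: "\<omega> \<in> space M" for \<omega>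
  proof (cases "Xs 1 \<omega> > 1")
    case False
    then have "max 0 (Xs 1 \<omega>) powr p \<le> 1 powr p" using p by (intro powr_mono2) auto
    then have "ennreal (max 0 (Xs 1 \<omega>) powr p) \<le> 1" by simp
    then show ?thesis by (simp add: add_increasing2)
  next
    case True
    obtain k where k: "2^k < Xs 1 \<omega>" "Xs 1 \<omega> \<le> 2^(Suc k)" using exists_dyadic[OF True] by auto
    have "max 0 (Xs 1 \<omega>) powr p \<le> (2^(Suc k)) powr p" using True k p by (intro powr_mono2) auto
    also have "(2::real)^(Suc k) = 2 powr (real (Suc k))" by (rule powr_realpow[symmetric]) simp
    also have "(2 powr (real (Suc k))) powr p = 2 powr (real (Suc k) * p)" by (simp add: powr_powr)
    finally have "ennreal (max 0 (Xs 1 \<omega>) powr p) \<le> c k * indicator (E k) \<omega>"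
      using k \<omega> by (simp add: c_def E_def)
    also have "\<dots> \<le> (\<Sum>k. c k * indicator (E k) \<omega>)"
    proof -
      have "(\<Sum>j\<in>{k}. c j * indicator (E j) \<omega>) \<le> (\<Sum>j. c j * indicator (E j) \<omega>)"
        by (rule sum_le_suminf[OF summableI]) auto
      then show ?thesis by (simp only: sum.insert_remove finite.emptyI empty_iff sum.empty) simp
    qed
    finally show ?thesis by (simp add: add_increasing)
  qed
  have "(\<integral>\<^sup>+\<omega>. ennreal (max 0 (Xs 1 \<omega>) powr p) \<partial>M) \<le> (\<integral>\<^sup>+\<omega>. 1 + (\<Sum>k. c k * indicator (E k) \<omega>) \<partial>M)"
    by (intro nn_integral_mono pw)
  also have "\<dots> = 1 + (\<Sum>k. c k * emeasure M (E k))"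
    by (simp add: nn_integral_add nn_integral_suminf nn_integral_cmult_indicator emeasure_space_1)
  also have "1 + (\<Sum>k. c k * emeasure M (E k)) \<le> 1 + (\<Sum>k. ennreal (D * 2 powr p * (2 powr (p - \<alpha>))^k))"
  proof (intro add_left_mono suminf_le summableI)
    fix k :: nat
    have "prob (E k) \<le> D * (2^k) powr (-\<alpha>)" unfolding E_def by (intro D) simp
    also have "(2::real)^k = 2 powr (real k)" by (rule powr_realpow[symmetric]) simp
    also have "(2 powr (real k)) powr (-\<alpha>) = 2 powr (- real k * \<alpha>)" by (simp add: powr_powr)
    finally have pr: "prob (E k) \<le> D * 2 powr (- real k * \<alpha>)" .
    have eq: "2 powr (real (Suc k) * p) * (D * 2 powr (- real k * \<alpha>)) = D * 2 powr p * (2 powr (p - \<alpha>))^k"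
    proof -
      have "(2 powr (p - \<alpha>))^k = 2 powr ((p - \<alpha>) * real k)" by (simp add: powr_realpow[symmetric] powr_powr)
      moreover have "2 powr (real (Suc k) * p) * 2 powr (- real k * \<alpha>) = 2 powr p * 2 powr ((p - \<alpha>) * real k)"
        by (simp add: powr_add[symmetric] algebra_simps)
      ultimately show ?thesis by (simp add: algebra_simps)
    qed
    have "c k * emeasure M (E k) \<le> ennreal (2 powr (real (Suc k) * p)) * ennreal (D * 2 powr (- real k * \<alpha>))"
      unfolding c_def emeasure_eq_measure using pr by (intro mult_left_mono ennreal_leI) auto
    also have "\<dots> = ennreal (2 powr (real (Suc k) * p) * (D * 2 powr (- real k * \<alpha>)))"
      using D by (simp add: ennreal_mult)
    finally show "c k * emeasure M (E k) \<le> ennreal (D * 2 powr p * (2 powr (p - \<alpha>))^k)"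
      unfolding eq .
  qed
  also have "(\<Sum>k. ennreal (D * 2 powr p * (2 powr (p - \<alpha>))^k)) = ennreal (\<Sum>k. D * 2 powr p * (2 powr (p - \<alpha>))^k)"
  proof (rule suminf_ennreal2)
    show "summable (\<lambda>k. D * 2 powr p * (2 powr (p - \<alpha>))^k)"
    proof (intro summable_mult summable_geometric)
      have "2 powr (p - \<alpha>) < 2 powr 0" using p by (intro powr_less_mono) auto
      then show "norm (2 powr (p - \<alpha>)) < 1" by simp
    qed
  qed (use D in auto)
  finally have "(\<integral>\<^sup>+\<omega>. ennreal (max 0 (Xs 1 \<omega>) powr p) \<partial>M) \<le> 1 + ennreal (\<Sum>k. D * 2 powr p * (2 powr (p - \<alpha>))^k)" .
  also have "\<dots> < \<infinity>" by (simp add: ennreal_add_eq_top less_top[symmetric])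
  finally show ?thesis .
qed

end

lemma abel_ennreal:
  fixes q v a :: "nat \<Rightarrow> ennreal" and c K :: ennreal
  assumes mono: "\<And>n. q (Suc n) \<le> q n"
    and step: "\<And>n. v (Suc n) + c * a n \<le> v n + K"
    and v0: "v 0 = 0"
  shows "(\<Sum>n<m. q n * (c * a n)) + q m * v m \<le> K * (\<Sum>n<m. q n)"
proof (induction m)
  case 0
  then show ?case by (simp add: v0)
next
  case (Suc m)
  have "(\<Sum>n<Suc m. q n * (c * a n)) + q (Suc m) * v (Suc m)
      = (\<Sum>n<m. q n * (c * a n)) + q m * (c * a m) + q (Suc m) * v (Suc m)" by simp
  also have "\<dots> \<le> (\<Sum>n<m. q n * (c * a n)) + q m * (c * a m) + q m * v (Suc m)"
    by (intro add_left_mono mult_right_mono mono) simp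
  also have "\<dots> = (\<Sum>n<m. q n * (c * a n)) + q m * (v (Suc m) + c * a m)"
    by (simp add: distrib_left add.assoc add.commute)
  also have "\<dots> \<le> (\<Sum>n<m. q n * (c * a n)) + q m * (v m + K)"
    by (intro add_left_mono mult_left_mono step) simp
  also have "\<dots> = ((\<Sum>n<m. q n * (c * a n)) + q m * v m) + q m * K"
    by (simp add: distrib_left add.assoc)
  also have "\<dots> \<le> K * (\<Sum>n<m. q n) + q m * K"
    by (intro add_right_mono Suc.IH)
  also have "\<dots> = K * (\<Sum>n<Suc m. q n)" by (simp add: distrib_left mult.commute)
  finally show ?case .
qed

context setting
begin

lemma SN_decomp:
  fixes G :: "real \<Rightarrow> ennreal"
  assumes G[measurable]: "G \<in> borel_measurable borel"
  shows "(\<integral>\<^sup>+\<omega>. G (S (N \<omega>) \<omega>) \<partial>M) =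
         (\<Sum>n. emeasure M {\<omega>\<in>space M. N \<omega> = n} * (\<integral>\<^sup>+\<omega>. G (S n \<omega>) \<partial>M))"
proof -
  have pw: "G (S (N \<omega>) \<omega>) = (\<Sum>n. indicator {\<omega>\<in>space M. N \<omega> = n} \<omega> * G (S n \<omega>))"
    if "\<omega> \<in> space M" for \<omega>
  proof -
    have "(\<lambda>n. indicator {\<omega>\<in>space M. N \<omega> = n} \<omega> * G (S n \<omega>)) = (\<lambda>n. if n = N \<omega> then G (S n \<omega>) else 0)"
      using that by (auto simp: fun_eq_iff indicator_def)
    moreover have "(\<lambda>n. if n = N \<omega> then G (S n \<omega>) else 0) sums G (S (N \<omega>) \<omega>)"
      by (rule sums_single)
    ultimately show ?thesis by (simp add: sums_iff)
  qed
  have "(\<integral>\<^sup>+\<omega>. G (S (N \<omega>) \<omega>) \<partial>M) = (\<integral>\<^sup>+\<omega>. (\<Sum>n. indicator {\<omega>\<in>space M. N \<omega> = n} \<omega> * G (S n \<omega>)) \<partial>M)"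
    by (intro nn_integral_cong pw)
  also have "\<dots> = (\<Sum>n. \<integral>\<^sup>+\<omega>. indicator {\<omega>\<in>space M. N \<omega> = n} \<omega> * G (S n \<omega>) \<partial>M)"
    by (intro nn_integral_suminf) measurable
  also have "\<dots> = (\<Sum>n. emeasure M {\<omega>\<in>space M. N \<omega> = n} * (\<integral>\<^sup>+\<omega>. G (S n \<omega>) \<partial>M))"
  proof (intro suminf_cong)
    fix n
    have "(\<integral>\<^sup>+\<omega>. indicator {\<omega>\<in>space M. N \<omega> = n} \<omega> * G (S n \<omega>) \<partial>M)
        = (\<integral>\<^sup>+\<omega>. indicator {real n} (real (N \<omega>)) * G (S n \<omega>) \<partial>M)"
      by (intro nn_integral_cong) (auto simp: indicator_def)
    also have "\<dots> = (\<integral>\<^sup>+\<omega>. (\<integral>\<^sup>+z. indicator {real n} (real (N \<omega>)) * G z \<partial>distr M borel (S n)) \<partial>M)"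
      by (rule indep_nn_fubini[OF indep_N_S, where f="\<lambda>y z. indicator {real n} y * G z"]) measurable
    also have "\<dots> = (\<integral>\<^sup>+\<omega>. indicator {real n} (real (N \<omega>)) * (\<integral>\<^sup>+\<omega>. G (S n \<omega>) \<partial>M) \<partial>M)"
      by (intro nn_integral_cong) (simp add: nn_integral_cmult nn_integral_distr)
    also have "\<dots> = (\<integral>\<^sup>+\<omega>. indicator {real n} (real (N \<omega>)) \<partial>M) * (\<integral>\<^sup>+\<omega>. G (S n \<omega>) \<partial>M)"
      by (rule nn_integral_multc) measurable
    also have "(\<integral>\<^sup>+\<omega>. indicator {real n} (real (N \<omega>)) \<partial>M) = (\<integral>\<^sup>+\<omega>. indicator {\<omega>\<in>space M. N \<omega> = n} \<omega> \<partial>M)"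
      by (intro nn_integral_cong) (auto simp: indicator_def)
    also have "\<dots> = emeasure M {\<omega>\<in>space M. N \<omega> = n}" by simp
    finally show "(\<integral>\<^sup>+\<omega>. indicator {\<omega>\<in>space M. N \<omega> = n} \<omega> * G (S n \<omega>) \<partial>M) =
        emeasure M {\<omega>\<in>space M. N \<omega> = n} * (\<integral>\<^sup>+\<omega>. G (S n \<omega>) \<partial>M)" .
  qed
  finally show ?thesis .
qed

end

context setting
begin

lemma X1_int: "integrable M (Xs 1)"
proof (rule ccontr)
  assume "\<not> integrable M (Xs 1)"
  then have "integral\<^sup>L M (Xs 1) = 0" by (rule not_integrable_integral_eq)
  with neg_mean show False by simp
qed

lemma P_int: "integrable P (\<lambda>x. x)"
  unfolding P_def using X1_int by (subst integrable_distr_eq) auto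

lemma P_mean: "(\<integral>x. x \<partial>P) < 0"
  unfolding P_def using neg_mean by (subst integral_distr) auto

lemma P_lower: "AE x in P. x \<ge> -B"
  unfolding P_def using lower by (subst AE_distr_iff) auto

lemma P_mom:
  assumes "0 < p" "p < \<alpha>"
  shows "integrable P (\<lambda>x. max 0 x powr p)"
proof (rule integrableI_nonneg)
  show "(\<lambda>x. max 0 x powr p) \<in> borel_measurable P" by (subst measurable_cong_sets[OF setsP refl]) simp
  show "AE x in P. 0 \<le> max 0 x powr p" by simp
  have "(\<integral>\<^sup>+x. ennreal (max 0 x powr p) \<partial>P) = (\<integral>\<^sup>+\<omega>. ennreal (max 0 (Xs 1 \<omega>) powr p) \<partial>M)"
    unfolding P_def by (subst nn_integral_distr) auto
  also have "\<dots> < \<infinity>" by (rule moment_finite[OF assms])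
  finally show "(\<integral>\<^sup>+x. ennreal (max 0 x powr p) \<partial>P) < \<infinity>" .
qed

lemma C_nonneg: "C \<ge> 0"
proof -
  have "measure M {\<omega>\<in>space M. N \<omega> = 1} = C" using N_law[of 1] by simp
  then show ?thesis by (metis measure_nonneg)
qed

lemma N_mono: "n \<ge> 1 \<Longrightarrow> emeasure M {\<omega>\<in>space M. N \<omega> = Suc n} \<le> emeasure M {\<omega>\<in>space M. N \<omega> = n}"
proof -
  assume n: "n \<ge> 1"
  have "real (Suc n) powr (- (1 + \<eta>)) \<le> real n powr (- (1 + \<eta>))"
    using n \<eta> by (intro powr_mono2') auto
  then have "C * real (Suc n) powr (- (1 + \<eta>)) \<le> C * real n powr (- (1 + \<eta>))"
    using C_nonneg by (intro mult_left_mono) auto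
  then have "ennreal (C * real (Suc n) powr (- (1 + \<eta>))) \<le> ennreal (C * real n powr (- (1 + \<eta>)))"
    by (rule ennreal_leI)
  then show ?thesis using n by (simp add: emeasure_eq_measure N_law del: of_nat_Suc)
qed

lemma lower_finite:
  assumes s: "0 < s" "s < \<alpha> - 1"
  shows "(\<integral>\<^sup>+\<omega>. ennreal (max 0 (S (N \<omega>) \<omega>) powr s) \<partial>M) < \<infinity>"
proof -
  define p where "p = s + 1"
  have p: "p > 1" "p < \<alpha>" using s by (auto simp: p_def)
  obtain c K0 where c: "c > 0" and dr: "\<And>y. integrable P (\<lambda>x. max 0 (y+x) powr p) \<and>
     (\<integral>x. max 0 (y+x) powr p \<partial>P) + c * max 0 y powr (p-1) \<le> max 0 y powr p + K0"
    using drift[OF probP setsP p(1) B_pos P_int P_mean P_lower P_mom[of p]] p by auto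
  define K where "K = max K0 0"
  have K: "K \<ge> 0" by (simp add: K_def)
  define V where "V y = max 0 y powr p" for y
  define W where "W y = max 0 y powr s" for y
  define v where "v n = (\<integral>\<^sup>+\<omega>. ennreal (V (S n \<omega>)) \<partial>M)" for n
  define a where "a n = (\<integral>\<^sup>+\<omega>. ennreal (W (S n \<omega>)) \<partial>M)" for n
  interpret PP: prob_space P by (rule probP)
  define g where "g y = (\<integral>\<^sup>+z. ennreal (V (y + z)) \<partial>P)" for y
  have step: "v (Suc n) + ennreal c * a n \<le> v n + ennreal K" for n
  proof -
    have "v (Suc n) = (\<integral>\<^sup>+\<omega>. ennreal (V (S n \<omega> + Xs (Suc n) \<omega>)) \<partial>M)"
      unfolding v_def by (simp add: S_Suc)
    also have "\<dots> = (\<integral>\<^sup>+\<omega>. (\<integral>\<^sup>+z. ennreal (V (S n \<omega> + z)) \<partial>distr M borel (Xs (Suc n))) \<partial>M)"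
      by (rule indep_nn_fubini[OF indep_S_X, where f="\<lambda>y z. ennreal (V (y + z))"]) (simp add: V_def)
    also have "\<dots> = (\<integral>\<^sup>+\<omega>. g (S n \<omega>) \<partial>M)"
      unfolding g_def by (simp add: distrX[of "Suc n", simplified])
    finally have vS: "v (Suc n) = (\<integral>\<^sup>+\<omega>. g (S n \<omega>) \<partial>M)" .
    have pw: "g y + ennreal c * ennreal (W y) \<le> ennreal (V y) + ennreal K" for y
    proof -
      have i0: "(\<integral>z. V (y + z) \<partial>P) \<ge> 0" by (simp add: V_def)
      have gy: "g y = ennreal (\<integral>z. V (y + z) \<partial>P)"
        unfolding g_def by (rule nn_integral_eq_integral) (use dr[of y] in \<open>auto simp: V_def\<close>)
      have "(\<integral>z. V (y + z) \<partial>P) + c * W y \<le> V y + K"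
        using dr[of y] by (simp add: V_def W_def p_def K_def add.commute) linarith
      then have "ennreal ((\<integral>z. V (y + z) \<partial>P) + c * W y) \<le> ennreal (V y + K)"
        by (rule ennreal_leI)
      then show ?thesis unfolding gy using i0 c K by (simp add: ennreal_plus ennreal_mult V_def W_def)
    qed
    have gm[measurable]: "g \<in> borel_measurable borel"
      unfolding g_def by (rule PP.borel_measurable_nn_integral) (simp add: V_def measurable_cong_sets[OF sets_pair_measure_cong[OF refl setsP] refl])
    have "v (Suc n) + ennreal c * a n = (\<integral>\<^sup>+\<omega>. g (S n \<omega>) + ennreal c * ennreal (W (S n \<omega>)) \<partial>M)"
      unfolding vS a_def
      by (subst nn_integral_add) (auto simp: nn_integral_cmult V_def W_def)
    also have "\<dots> \<le> (\<integral>\<^sup>+\<omega>. ennreal (V (S n \<omega>)) + ennreal K \<partial>M)"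
      by (intro nn_integral_mono pw)
    also have "\<dots> = v n + ennreal K"
      unfolding v_def by (subst nn_integral_add) (auto simp: V_def emeasure_space_1)
    finally show ?thesis .
  qed
  have v0: "v 0 = 0" by (simp add: v_def V_def)
  have a0: "a 0 = 0" using s by (simp add: a_def W_def)
  define q where "q n = emeasure M {\<omega>\<in>space M. N \<omega> = max n 1}" for n
  have qmono: "q (Suc n) \<le> q n" for n
  proof (cases "n = 0")
    case False
    then have "max (Suc n) 1 = Suc n" "max n 1 = n" by auto
    then show ?thesis using N_mono[of n] False by (simp add: q_def)
  qed (simp add: q_def)
  have qsum: "(\<Sum>n<m. q n) \<le> 2" for m
  proof -
    have "(\<Sum>n<m. q n) \<le> (\<Sum>n<Suc m. q n)" by (intro sum_mono2) auto
    also have "\<dots> = q 0 + (\<Sum>n<m. q (Suc n))" by (subst sum.lessThan_Suc_shift) simp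
    also have "(\<Sum>n<m. q (Suc n)) = (\<Sum>n<m. emeasure M {\<omega>\<in>space M. N \<omega> = Suc n})"
      by (simp add: q_def)
    also have "\<dots> = emeasure M (\<Union>n<m. {\<omega>\<in>space M. N \<omega> = Suc n})"
      by (rule sum_emeasure) (auto simp: disjoint_family_on_def)
    also have "\<dots> \<le> 1" by (rule emeasure_le_1)
    also have "q 0 \<le> 1" unfolding q_def by (rule emeasure_le_1)
    finally show ?thesis by (simp add: one_add_one[symmetric] add_mono del: one_add_one)
  qed
  have partial: "(\<Sum>n<m. q n * (ennreal c * a n)) \<le> ennreal K * 2" for m
  proof -
    have "(\<Sum>n<m. q n * (ennreal c * a n)) \<le> (\<Sum>n<m. q n * (ennreal c * a n)) + q m * v m" by simp
    also have "\<dots> \<le> ennreal K * (\<Sum>n<m. q n)" by (rule abel_ennreal[where q=q and v=v and a=a and c="ennreal c" and K="ennreal K", OF qmono step v0])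
    also have "\<dots> \<le> ennreal K * 2" by (intro mult_left_mono qsum) simp
    finally show ?thesis .
  qed
  have "(\<Sum>n. q n * (ennreal c * a n)) \<le> ennreal K * 2"
    unfolding suminf_eq_SUP by (intro SUP_least partial)
  then have le2: "ennreal c * (\<Sum>n. q n * a n) \<le> ennreal K * 2"
    by (simp add: mult.left_commute)
  have "ennreal K * 2 < \<infinity>" by (simp add: ennreal_mult_less_top)
  with le2 have fin: "ennreal c * (\<Sum>n. q n * a n) < \<infinity>" by (rule le_less_trans)
  have "(\<integral>\<^sup>+\<omega>. ennreal (max 0 (S (N \<omega>) \<omega>) powr s) \<partial>M)
       = (\<Sum>n. emeasure M {\<omega>\<in>space M. N \<omega> = n} * a n)"
    unfolding a_def W_def by (rule SN_decomp) simp
  also have "\<dots> \<le> (\<Sum>n. q n * a n)"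
  proof (intro suminf_le summableI)
    fix n show "emeasure M {\<omega>\<in>space M. N \<omega> = n} * a n \<le> q n * a n"
      by (cases "n = 0") (auto simp: a0 q_def)
  qed
  also have "\<dots> < \<infinity>"
  proof (rule ccontr)
    assume "\<not> (\<Sum>n. q n * a n) < \<infinity>"
    then have "(\<Sum>n. q n * a n) = \<infinity>" by (simp add: less_top[symmetric])
    then show False using fin c by (simp add: ennreal_mult_top)
  qed
  finally show ?thesis .
qed

end

lemma bernoulli_aux:
  fixes p :: real and n :: nat
  assumes "0 \<le> p" "p \<le> 1" "real n * p \<le> 1"
  shows "1 - (1 - p)^n \<ge> real n * p / 2"
proof -
  have b: "1 + real n * p \<le> (1 + p)^n" by (rule Bernoulli_inequality) (use assms in simp)
  have "(1 - p)^n * (1 + real n * p) \<le> (1 - p)^n * (1 + p)^n"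
    using assms b by (intro mult_left_mono) auto
  also have "\<dots> = (1 - p^2)^n" by (simp add: power_mult_distrib[symmetric] algebra_simps power2_eq_square)
  also have "\<dots> \<le> 1" using assms by (intro power_le_one) (auto simp: power_le_one)
  finally have h: "(1 - p)^n * (1 + real n * p) \<le> 1" .
  have np: "0 \<le> real n * p" using assms by simp
  have "(1 - p)^n \<le> 1 / (1 + real n * p)" using h np by (simp add: field_simps)
  moreover have "real n * p / 2 \<le> 1 - 1 / (1 + real n * p)"
  proof -
    have "real n * p / 2 \<le> real n * p / (1 + real n * p)"
      using np assms by (intro divide_left_mono) (auto simp: add_pos_nonneg)
    also have "\<dots> = 1 - 1 / (1 + real n * p)" using np by (simp add: field_simps)
    finally show ?thesis .
  qed
  ultimately show ?thesis by linarith
qed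

lemma sum_lower_aux:
  fixes f :: "nat \<Rightarrow> real"
  assumes "finite A" "k \<in> A" "\<And>j. j \<in> A \<Longrightarrow> f j \<ge> -B" "f k > t"
  shows "sum f A \<ge> t - real (card A - 1) * B"
proof -
  have "sum f A = f k + sum f (A - {k})" using assms by (simp add: sum.remove)
  moreover have "real (card (A - {k})) * (-B) \<le> sum f (A - {k})"
    using assms by (intro sum_bounded_below) auto
  moreover have "card (A - {k}) = card A - 1" using assms by simp
  ultimately show ?thesis using assms by (simp add: algebra_simps)
qed

context setting
begin

lemma prob_exists_big:
  assumes n: "n \<ge> 1"
  shows "prob {\<omega>\<in>space M. \<exists>k\<in>{1..n}. Xs k \<omega> > t} = 1 - (1 - prob {\<omega>\<in>space M. Xs 1 \<omega> > t})^n"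
proof -
  have ev: "{\<omega>\<in>space M. Xs 1 \<omega> > t} \<in> events" by measurable
  have pk: "prob {\<omega>\<in>space M. Xs k \<omega> \<le> t} = 1 - prob {\<omega>\<in>space M. Xs 1 \<omega> > t}" if "k \<ge> 1" for k
  proof -
    have "prob {\<omega>\<in>space M. Xs k \<omega> \<le> t} = measure (distr M borel (Xs k)) {..t}"
      using that by (subst measure_distr) (auto intro!: arg_cong[where f=prob])
    also have "\<dots> = measure (distr M borel (Xs 1)) {..t}" using ident[OF that] by simp
    also have "\<dots> = prob {\<omega>\<in>space M. Xs 1 \<omega> \<le> t}"
      by (subst measure_distr) (auto intro!: arg_cong[where f=prob])
    also have "{\<omega>\<in>space M. Xs 1 \<omega> \<le> t} = space M - {\<omega>\<in>space M. Xs 1 \<omega> > t}" by auto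
    also have "prob \<dots> = 1 - prob {\<omega>\<in>space M. Xs 1 \<omega> > t}" by (rule prob_compl[OF ev])
    finally show ?thesis .
  qed
  have "prob (\<Inter>k\<in>{1..n}. F k -` {..t} \<inter> space M) = (\<Prod>k\<in>{1..n}. prob (F k -` {..t} \<inter> space M))"
    by (rule indep_varsD[OF indepF]) (use n in auto)
  moreover have "(\<Inter>k\<in>{1..n}. F k -` {..t} \<inter> space M) = (\<Inter>k\<in>{1..n}. {\<omega>\<in>space M. Xs k \<omega> \<le> t})"
    by (auto simp: F_def)
  moreover have "(\<Prod>k\<in>{1..n}. prob (F k -` {..t} \<inter> space M)) = (\<Prod>k\<in>{1..n}. prob {\<omega>\<in>space M. Xs k \<omega> \<le> t})"
    by (intro prod.cong refl arg_cong[where f=prob]) (auto simp: F_def)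
  ultimately have "prob (\<Inter>k\<in>{1..n}. {\<omega>\<in>space M. Xs k \<omega> \<le> t}) = (\<Prod>k\<in>{1..n}. prob {\<omega>\<in>space M. Xs k \<omega> \<le> t})"
    by simp
  also have "\<dots> = (\<Prod>k\<in>{1..n}. 1 - prob {\<omega>\<in>space M. Xs 1 \<omega> > t})"
    by (intro prod.cong refl pk) auto
  also have "\<dots> = (1 - prob {\<omega>\<in>space M. Xs 1 \<omega> > t})^n" by simp
  finally have pi: "prob (\<Inter>k\<in>{1..n}. {\<omega>\<in>space M. Xs k \<omega> \<le> t}) = (1 - prob {\<omega>\<in>space M. Xs 1 \<omega> > t})^n" .
  have "{\<omega>\<in>space M. \<exists>k\<in>{1..n}. Xs k \<omega> > t} = space M - (\<Inter>k\<in>{1..n}. {\<omega>\<in>space M. Xs k \<omega> \<le> t})"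
    using n by (auto simp: not_less) (metis atLeastAtMost_iff not_less)
  moreover have "(\<Inter>k\<in>{1..n}. {\<omega>\<in>space M. Xs k \<omega> \<le> t}) \<in> events"
    using n by (intro sets.finite_INT) auto
  ultimately show ?thesis using pi by (simp add: prob_compl)
qed

lemma C_pos: "C > 0"
proof -
  have sm: "summable (\<lambda>k. real (Suc k) powr (- (1 + \<eta>)))"
  proof -
    have "summable (\<lambda>k. real k powr (- (1 + \<eta>)))" using \<eta> by (subst summable_real_powr_iff) simp
    then have "summable (\<lambda>k. real (k + 1) powr (- (1 + \<eta>)))" by (subst summable_iff_shift) 
    then show ?thesis by simp
  qed
  have "0 < (\<Sum>k. real (Suc k) powr (- (1 + \<eta>)))" by (rule suminf_pos[OF sm]) simp
  then show ?thesis by (simp add: C_def)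
qed

lemma AE_all_lower: "AE \<omega> in M. \<forall>j. j \<ge> 1 \<longrightarrow> Xs j \<omega> \<ge> -B"
proof (subst AE_all_countable, intro allI)
  fix j :: nat
  show "AE \<omega> in M. j \<ge> 1 \<longrightarrow> Xs j \<omega> \<ge> -B"
  proof (cases "j \<ge> 1")
    case True
    have "AE x in distr M borel (Xs 1). x \<ge> -B" using lower by (subst AE_distr_iff) auto
    then have "AE x in distr M borel (Xs j). x \<ge> -B" unfolding ident[OF True] .
    then have "AE \<omega> in M. Xs j \<omega> \<ge> -B" using True by (subst (asm) AE_distr_iff) auto
    then show ?thesis by auto
  qed simp
qed

lemma a_lower:
  assumes n: "n \<ge> 1" and s: "s > 0"
  shows "ennreal ((real n * B) powr s) * ennreal (prob {\<omega>\<in>space M. \<exists>k\<in>{1..n}. Xs k \<omega> > 2 * real n * B})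
           \<le> (\<integral>\<^sup>+\<omega>. ennreal (max 0 (S n \<omega>) powr s) \<partial>M)"
proof -
  define E where "E = {\<omega>\<in>space M. \<exists>k\<in>{1..n}. Xs k \<omega> > 2 * real n * B}"
  have E[measurable]: "E \<in> sets M" unfolding E_def by measurable
  have "ennreal ((real n * B) powr s) * ennreal (prob E) = (\<integral>\<^sup>+\<omega>. ennreal ((real n * B) powr s) * indicator E \<omega> \<partial>M)"
    by (simp add: nn_integral_cmult_indicator emeasure_eq_measure)
  also have "\<dots> \<le> (\<integral>\<^sup>+\<omega>. ennreal (max 0 (S n \<omega>) powr s) \<partial>M)"
  proof (intro nn_integral_mono_AE)
    show "AE \<omega> in M. ennreal ((real n * B) powr s) * indicator E \<omega> \<le> ennreal (max 0 (S n \<omega>) powr s)"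
      using AE_all_lower
    proof eventually_elim
      case (elim \<omega>)
      show ?case
      proof (cases "\<omega> \<in> E")
        case True
        then obtain k where k: "k \<in> {1..n}" "Xs k \<omega> > 2 * real n * B" and \<omega>: "\<omega> \<in> space M"
          by (auto simp: E_def)
        have "S n \<omega> \<ge> 2 * real n * B - real (card {1..n} - 1) * B"
          unfolding S_def by (rule sum_lower_aux[where k=k]) (use k elim in auto)
        then have "S n \<omega> \<ge> real n * B" using n B_pos by (simp add: of_nat_diff algebra_simps)
        then have "(real n * B) powr s \<le> max 0 (S n \<omega>) powr s"
          using n B_pos s by (intro powr_mono2) auto
        then show ?thesis using True by (simp add: ennreal_leI)
      qed simp
    qed
  qed
  finally show ?thesis unfolding E_def .
qed

lemma harmonic_tail_infinite:
  fixes \<kappa> :: real and n0 :: nat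
  assumes "\<kappa> > 0"
  shows "(\<Sum>n. ennreal (if n \<ge> n0 then \<kappa> / real n else 0)) = \<infinity>"
proof (rule ccontr)
  assume "\<not> ?thesis"
  then have "summable (\<lambda>n. if n \<ge> n0 then \<kappa> / real n else 0)"
    using assms by (intro summable_suminf_not_top) auto
  then have "summable (\<lambda>n. if n + n0 \<ge> n0 then \<kappa> / real (n + n0) else 0)"
    by (subst summable_iff_shift[where k=n0])
  then have "summable (\<lambda>n. \<kappa> * inverse (real (n + n0)))" by (simp add: field_simps)
  then have "summable (\<lambda>n. inverse (real (n + n0)))" using assms by simp
  then have "summable (\<lambda>n. inverse (real n) :: real)" by (subst (asm) summable_iff_shift[where k=n0])
  then show False using not_summable_harmonic by blast
qed

lemma upper_infinite:
  assumes s: "s > \<alpha> + \<eta> - 1"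
  shows "(\<integral>\<^sup>+\<omega>. ennreal (max 0 (S (N \<omega>) \<omega>) powr s) \<partial>M) = \<infinity>"
proof -
  have s0: "s > 0" using s \<alpha> \<eta> by simp
  obtain x0 where x0: "x0 \<ge> 1" "\<And>x. x \<ge> x0 \<Longrightarrow> prob {\<omega>\<in>space M. Xs 1 \<omega> > x} \<le> 2 * x powr (-\<alpha>) \<and>
                    x powr (-\<alpha>) / 2 \<le> prob {\<omega>\<in>space M. Xs 1 \<omega> > x}"
    using tail_bounds by blast
  define r where "r = 1 / (2 * (2*B) powr (-\<alpha>))"
  have r: "r > 0" using B_pos by (simp add: r_def)
  define N1 where "N1 = r powr (1 / (1 - \<alpha>))"
  have N1: "N1 > 0" using r by (simp add: N1_def)
  define n0 where "n0 = nat (ceiling (max (max 1 (x0 / (2*B))) N1))"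
  define \<kappa> where "\<kappa> = C * B powr s * (2*B) powr (-\<alpha>) / 4"
  have \<kappa>: "\<kappa> > 0" using C_pos B_pos by (simp add: \<kappa>_def)
  have termb: "ennreal (\<kappa> / real n) \<le> emeasure M {\<omega>\<in>space M. N \<omega> = n} * (\<integral>\<^sup>+\<omega>. ennreal (max 0 (S n \<omega>) powr s) \<partial>M)"
    if n: "n \<ge> n0" for n
  proof -
    have nn: "real n \<ge> max (max 1 (x0 / (2*B))) N1" using n unfolding n0_def by linarith
    then have n1: "n \<ge> 1" and nx0: "2 * real n * B \<ge> x0" and nN1: "real n \<ge> N1"
      using B_pos by (auto simp: field_simps)
    have npos: "real n > 0" using n1 by simp
    define t where "t = 2 * real n * B"
    define p where "p = prob {\<omega>\<in>space M. Xs 1 \<omega> > t}"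
    have pb: "p \<le> 2 * t powr (-\<alpha>)" "t powr (-\<alpha>) / 2 \<le> p" using x0(2)[of t] nx0 by (auto simp: p_def t_def)
    have t_eq: "t powr (-\<alpha>) = (2*B) powr (-\<alpha>) * real n powr (-\<alpha>)"
    proof -
      have "t = (2*B) * real n" by (simp add: t_def)
      then show ?thesis by (simp only: powr_mult)
    qed
    have "real n powr (1 - \<alpha>) \<le> N1 powr (1 - \<alpha>)" using \<alpha> N1 nN1 by (intro powr_mono2') auto
    also have "N1 powr (1 - \<alpha>) = r" using r \<alpha> by (simp add: N1_def powr_powr)
    finally have nr: "real n powr (1 - \<alpha>) \<le> r" .
    have "real n * p \<le> real n * (2 * t powr (-\<alpha>))" using pb npos by (intro mult_left_mono) auto
    also have "\<dots> = 2 * (2*B) powr (-\<alpha>) * (real n * real n powr (-\<alpha>))"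
      unfolding t_eq by (simp add: algebra_simps)
    also have "real n * real n powr (-\<alpha>) = real n powr (1 - \<alpha>)"
      using powr_mult_base[of "real n" "-\<alpha>"] by simp
    also have "2 * (2*B) powr (-\<alpha>) * real n powr (1 - \<alpha>) \<le> 2 * (2*B) powr (-\<alpha>) * r"
      using nr B_pos by (intro mult_left_mono) auto
    also have "\<dots> = 1" using B_pos by (simp add: r_def)
    finally have np1: "real n * p \<le> 1" .
    have p01: "0 \<le> p" "p \<le> 1" by (auto simp: p_def)
    have pE: "prob {\<omega>\<in>space M. \<exists>k\<in>{1..n}. Xs k \<omega> > t} \<ge> real n * p / 2"
      using prob_exists_big[OF n1, of t] bernoulli_aux[OF p01 np1] by (simp add: p_def)
    have a: "ennreal ((real n * B) powr s) * ennreal (real n * p / 2) \<le> (\<integral>\<^sup>+\<omega>. ennreal (max 0 (S n \<omega>) powr s) \<partial>M)"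
      using a_lower[OF n1 s0] pE unfolding t_def
      by (meson ennreal_leI mult_left_mono order_trans zero_le)
    have em: "emeasure M {\<omega>\<in>space M. N \<omega> = n} = ennreal (C * real n powr (- (1 + \<eta>)))"
      using N_law[OF n1] by (simp add: emeasure_eq_measure)
    have real_ineq: "\<kappa> / real n \<le> C * real n powr (- (1 + \<eta>)) * ((real n * B) powr s * (real n * p / 2))"
    proof -
      have "\<kappa> / real n = \<kappa> * real n powr (-1)" using npos by (simp add: powr_minus_divide)
      also have "\<dots> \<le> \<kappa> * real n powr (s - \<alpha> - \<eta>)"
        using \<kappa> s n1 by (intro mult_left_mono powr_mono) auto
      also have "\<dots> = C * real n powr (- (1 + \<eta>)) * ((real n * B) powr s * (real n * (t powr (-\<alpha>) / 2) / 2))"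
      proof -
        have "real n powr (- (1 + \<eta>)) * real n powr s * real n * real n powr (-\<alpha>) = real n powr (s - \<alpha> - \<eta>)"
        proof -
          have "real n powr (- (1 + \<eta>)) * real n powr s * real n * real n powr (-\<alpha>)
              = real n powr (- (1 + \<eta>)) * real n powr s * real n powr 1 * real n powr (-\<alpha>)"
            using npos by simp
          also have "\<dots> = real n powr (- (1 + \<eta>) + s + 1 + (-\<alpha>))" by (simp only: powr_add)
          also have "- (1 + \<eta>) + s + 1 + (-\<alpha>) = s - \<alpha> - \<eta>" by simp
          finally show ?thesis .
        qed
        then show ?thesis using npos B_pos
          by (simp add: \<kappa>_def t_eq powr_mult field_simps)
      qed
      also have "\<dots> \<le> C * real n powr (- (1 + \<eta>)) * ((real n * B) powr s * (real n * p / 2))"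
        using pb C_pos npos by (intro mult_left_mono divide_right_mono) auto
      finally show ?thesis .
    qed
    have "ennreal (\<kappa> / real n) \<le> ennreal (C * real n powr (- (1 + \<eta>))) * (ennreal ((real n * B) powr s) * ennreal (real n * p / 2))"
      using real_ineq C_pos p01 by (simp add: ennreal_mult[symmetric] ennreal_leI)
    also have "\<dots> \<le> emeasure M {\<omega>\<in>space M. N \<omega> = n} * (\<integral>\<^sup>+\<omega>. ennreal (max 0 (S n \<omega>) powr s) \<partial>M)"
      unfolding em by (intro mult_left_mono a) simp
    finally show ?thesis .
  qed
  have "\<infinity> = (\<Sum>n. ennreal (if n \<ge> n0 then \<kappa> / real n else 0))"
    by (rule harmonic_tail_infinite[OF \<kappa>, symmetric])
  also have "\<dots> \<le> (\<Sum>n. emeasure M {\<omega>\<in>space M. N \<omega> = n} * (\<integral>\<^sup>+\<omega>. ennreal (max 0 (S n \<omega>) powr s) \<partial>M))"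
    by (intro suminf_le summableI) (auto intro: termb)
  also have "\<dots> = (\<integral>\<^sup>+\<omega>. ennreal (max 0 (S (N \<omega>) \<omega>) powr s) \<partial>M)"
    by (rule SN_decomp[symmetric]) simp
  finally show ?thesis by (simp add: top_unique)
qed



end

theorem mainTheorem13:
  fixes M :: "'a measure" and Xs :: "nat \<Rightarrow> 'a \<Rightarrow> real" and N :: "'a \<Rightarrow> nat"
    and B \<alpha> \<eta> C :: real
  assumes "prob_space M"
    and indep: "prob_space.indep_vars M (\<lambda>_. borel)
                  (\<lambda>i. if i = 0 then (\<lambda>\<omega>. real (N \<omega>)) else Xs i) UNIV"
    and ident: "\<And>i. i \<ge> 1 \<Longrightarrow> distr M borel (Xs i) = distr M borel (Xs 1)"
    and B_pos: "B > 0"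
    and lower: "AE \<omega> in M. Xs 1 \<omega> \<ge> - B"
    and neg_mean: "integral\<^sup>L M (Xs 1) < 0"
    and \<alpha>: "\<alpha> > 1"
    and tail: "(\<lambda>x. measure M {\<omega> \<in> space M. Xs 1 \<omega> > x}) \<sim>[at_top] (\<lambda>x. x powr (- \<alpha>))"
    and \<eta>: "\<eta> > 0"
    and C_def: "C = 1 / (\<Sum>k. real (Suc k) powr (- (1 + \<eta>)))"
    and N_law: "\<And>k. k \<ge> 1 \<Longrightarrow> measure M {\<omega> \<in> space M. N \<omega> = k} = C * real k powr (- (1 + \<eta>))"
  shows "ereal (\<alpha> - 1) \<le> moment_index M (\<lambda>\<omega>. \<Sum>k = 1..N \<omega>. Xs k \<omega>)
       \<and> moment_index M (\<lambda>\<omega>. \<Sum>k = 1..N \<omega>. Xs k \<omega>) \<le> ereal (\<alpha> + \<eta> - 1)"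
proof -
  interpret setting M Xs N B \<alpha> \<eta> C
    by (rule setting.intro[OF assms(1) setting_axioms.intro]) (fact+)
  define T where "T = {s. 0 \<le> s \<and> (\<integral>\<^sup>+ \<omega>. ennreal (max 0 (S (N \<omega>) \<omega>) powr s) \<partial>M) < \<infinity>}"
  have mi: "moment_index M (\<lambda>\<omega>. \<Sum>k = 1..N \<omega>. Xs k \<omega>) = Sup (ereal ` T)"
    unfolding moment_index_def T_def S_def ..
  have T0: "0 \<in> T"
  proof -
    have "(\<integral>\<^sup>+ \<omega>. ennreal (max 0 (S (N \<omega>) \<omega>) powr 0) \<partial>M) \<le> (\<integral>\<^sup>+ \<omega>. 1 \<partial>M)"
      by (intro nn_integral_mono) auto
    also have "\<dots> = 1" by (simp add: emeasure_space_1)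
    also have "(1::ennreal) < \<infinity>" by simp
    finally show ?thesis unfolding T_def by simp
  qed
  have low: "ereal (\<alpha> - 1) \<le> Sup (ereal ` T)"
  proof (rule dense_le)
    fix w assume w: "w < ereal (\<alpha> - 1)"
    show "w \<le> Sup (ereal ` T)"
    proof (cases "w \<le> ereal 0")
      case True
      have "ereal 0 \<le> Sup (ereal ` T)" using T0 by (intro Sup_upper) auto
      with True show ?thesis by simp
    next
      case False
      then obtain t where t: "w = ereal t" using w by (cases w) auto
      have "0 < t" "t < \<alpha> - 1" using False w t by auto
      then have "t \<in> T" unfolding T_def using lower_finite by auto
      then show ?thesis unfolding t by (intro Sup_upper) auto
    qed
  qed
  have up: "Sup (ereal ` T) \<le> ereal (\<alpha> + \<eta> - 1)"
  proof (rule Sup_least)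
    fix x assume "x \<in> ereal ` T"
    then obtain s where s: "x = ereal s" "s \<in> T" by auto
    show "x \<le> ereal (\<alpha> + \<eta> - 1)"
    proof (rule ccontr)
      assume "\<not> x \<le> ereal (\<alpha> + \<eta> - 1)"
      then have "s > \<alpha> + \<eta> - 1" using s by auto
      then have "(\<integral>\<^sup>+ \<omega>. ennreal (max 0 (S (N \<omega>) \<omega>) powr s) \<partial>M) = \<infinity>" by (rule upper_infinite)
      then show False using s unfolding T_def by simp
    qed
  qed
  show ?thesis unfolding mi using low up by simp
qed

end
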